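(* Let $\lambda$ be any one of the four functions $\mu,\mu^*,\nu,\nu^*$. Then for all positive integers $n_1,n_2,m$ (with additionally $n_1,n_2\ge m$ when $\lambda=\mu^*$ or $\lambda=\nu^*$), $$\lambda(n_1+n_2,m)\le \lambda(n_1,m)+\lambda(n_2,m).$$
   Context: Let $\mathbb F_2=\{0,1\}$ be the field with two elements. For $u\in\mathbb F_2^n$, $|u|$ denotes the Hamming weight of $u$. A wiring on $n$ vertices is a matrix $W=(w_{i,j})\in M(n,n;\mathbb F_2)$ with $w_{i,i}=1$ for all $i$. The degree of vertex $j$ is the number of $1$s in the $j$th column of $W$, and $\deg(W)$ is the maximum degree over all vertices. For $c\in\mathbb F_2^n$, $M(W,c)=\max\{|Wx+c| : x\in\mathbb F_2^n\}$. For $n,m\ge1$, $A(n,m)$ is the set of wirings on $n$ vertices with $\deg(W)\le m$; for $n\ge m$, $A^*(n,m)$ is the set of wirings on $n$ vertices in which every vertex has degree exactly $m$. Define $\mu(n,m)=\min\{M(W,0): W\in A(n,m)\}$, $\nu(n,m)=\min\{M(W,c): W\in A(n,m),\ c\in\mathbb F_2^n\}$, and for $n\ge m$, $\mu^*(n,m)=\min\{M(W,0): W\in A^*(n,m)\}$, $\nu^*(n,m)=\min\{M(W,c): W\in A^*(n,m),\ c\in\mathbb F_2^n\}$. *)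

theory Defs
  imports Main "HOL-Library.Z2"
begin

text \<open>Vectors in F_2^n are functions nat => bit vanishing at indices >= n;
  n x n matrices over F_2 are functions nat => nat => bit vanishing outside {0..<n} x {0..<n}.\<close>

definition vecs :: "nat \<Rightarrow> (nat \<Rightarrow> bit) set" where
  "vecs n = {x. \<forall>i. n \<le> i \<longrightarrow> x i = 0}"

definition mats :: "nat \<Rightarrow> (nat \<Rightarrow> nat \<Rightarrow> bit) set" where
  "mats n = {W. \<forall>i j. (n \<le> i \<or> n \<le> j) \<longrightarrow> W i j = 0}"

definition hweight :: "nat \<Rightarrow> (nat \<Rightarrow> bit) \<Rightarrow> nat" where
  "hweight n u = card {i. i < n \<and> u i \<noteq> 0}"

definition mat_vec_aff :: "nat \<Rightarrow> (nat \<Rightarrow> nat \<Rightarrow> bit) \<Rightarrow> (nat \<Rightarrow> bit) \<Rightarrow> (nat \<Rightarrow> bit) \<Rightarrow> (nat \<Rightarrow> bit)" where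
  "mat_vec_aff n W x c = (\<lambda>i. if i < n then (\<Sum>j<n. W i j * x j) + c i else 0)"

definition wiring :: "nat \<Rightarrow> (nat \<Rightarrow> nat \<Rightarrow> bit) \<Rightarrow> bool" where
  "wiring n W \<longleftrightarrow> W \<in> mats n \<and> (\<forall>i<n. W i i = 1)"

definition vdeg :: "nat \<Rightarrow> (nat \<Rightarrow> nat \<Rightarrow> bit) \<Rightarrow> nat \<Rightarrow> nat" where
  "vdeg n W j = card {i. i < n \<and> W i j = 1}"

definition wdeg :: "nat \<Rightarrow> (nat \<Rightarrow> nat \<Rightarrow> bit) \<Rightarrow> nat" where
  "wdeg n W = Max (vdeg n W ` {..<n})"

definition MW :: "nat \<Rightarrow> (nat \<Rightarrow> nat \<Rightarrow> bit) \<Rightarrow> (nat \<Rightarrow> bit) \<Rightarrow> nat" where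
  "MW n W c = Max ((\<lambda>x. hweight n (mat_vec_aff n W x c)) ` vecs n)"

definition Aset :: "nat \<Rightarrow> nat \<Rightarrow> (nat \<Rightarrow> nat \<Rightarrow> bit) set" where
  "Aset n m = {W. wiring n W \<and> wdeg n W \<le> m}"

definition Astar :: "nat \<Rightarrow> nat \<Rightarrow> (nat \<Rightarrow> nat \<Rightarrow> bit) set" where
  "Astar n m = {W. wiring n W \<and> (\<forall>j<n. vdeg n W j = m)}"

definition mu :: "nat \<Rightarrow> nat \<Rightarrow> nat" where
  "mu n m = Min ((\<lambda>W. MW n W (\<lambda>_. 0)) ` Aset n m)"

definition nu :: "nat \<Rightarrow> nat \<Rightarrow> nat" where
  "nu n m = Min ((\<lambda>(W, c). MW n W c) ` (Aset n m \<times> vecs n))"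

definition mu_star :: "nat \<Rightarrow> nat \<Rightarrow> nat" where
  "mu_star n m = Min ((\<lambda>W. MW n W (\<lambda>_. 0)) ` Astar n m)"

definition nu_star :: "nat \<Rightarrow> nat \<Rightarrow> nat" where
  "nu_star n m = Min ((\<lambda>(W, c). MW n W c) ` (Astar n m \<times> vecs n))"

end

theory Submission
  imports Defs
begin

lemma hweight_le: "hweight n u \<le> n"
proof -
  have "{i. i < n \<and> u i \<noteq> 0} \<subseteq> {..<n}" by auto
  then have "hweight n u \<le> card {..<n}" unfolding hweight_def by (intro card_mono) auto
  then show ?thesis by simp
qed

lemma hweight_cong: "(\<And>i. i < n \<Longrightarrow> u i = v i) \<Longrightarrow> hweight n u = hweight n v"
  unfolding hweight_def by (rule arg_cong[where f=card]) auto

lemma hweight_split: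
  "hweight (n1+n2) y = hweight n1 y + hweight n2 (\<lambda>k. y (n1+k))"
proof -
  have e: "{i. i < n1+n2 \<and> y i \<noteq> 0} = {i. i < n1 \<and> y i \<noteq> 0} \<union> (\<lambda>k. n1+k) ` {k. k < n2 \<and> y (n1+k) \<noteq> 0}"
  proof (intro equalityI subsetI)
    fix i assume "i \<in> {i. i < n1+n2 \<and> y i \<noteq> 0}"
    then have i: "i < n1+n2" "y i \<noteq> 0" by auto
    show "i \<in> {i. i < n1 \<and> y i \<noteq> 0} \<union> (\<lambda>k. n1+k) ` {k. k < n2 \<and> y (n1+k) \<noteq> 0}"
    proof (cases "i < n1")
      case False
      then have "i = n1 + (i - n1)" "i - n1 < n2" using i by auto
      then show ?thesis using i by (intro UnI2 image_eqI[of _ _ "i - n1"]) auto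
    qed (use i in auto)
  qed auto
  have "card ({i. i < n1 \<and> y i \<noteq> 0} \<union> (\<lambda>k. n1+k) ` {k. k < n2 \<and> y (n1+k) \<noteq> 0})
     = card {i. i < n1 \<and> y i \<noteq> 0} + card ((\<lambda>k. n1+k) ` {k. k < n2 \<and> y (n1+k) \<noteq> 0})"
    by (rule card_Un_disjoint) auto
  also have "card ((\<lambda>k. n1+k) ` {k. k < n2 \<and> y (n1+k) \<noteq> 0}) = card {k. k < n2 \<and> y (n1+k) \<noteq> 0}"
    by (rule card_image) (auto simp: inj_on_def)
  finally show ?thesis unfolding hweight_def e by simp
qed

lemma sum_split: "(\<Sum>j<n1+n2. f j) = (\<Sum>j<n1. f j) + (\<Sum>k<n2. f (n1+k :: nat))"
  by (induction n2) (auto simp: add.assoc)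

lemma MW_fin: "finite ((\<lambda>x. hweight n (mat_vec_aff n W x c)) ` vecs n)"
  by (rule finite_subset[of _ "{..n}"]) (auto simp: hweight_le)

lemma MW_ne: "(\<lambda>x. hweight n (mat_vec_aff n W x c)) ` vecs n \<noteq> {}"
  unfolding vecs_def by auto

lemma MW_ge: "x \<in> vecs n \<Longrightarrow> hweight n (mat_vec_aff n W x c) \<le> MW n W c"
  unfolding MW_def by (rule Max_ge[OF MW_fin]) auto

definition blk :: "nat \<Rightarrow> (nat \<Rightarrow> nat \<Rightarrow> bit) \<Rightarrow> (nat \<Rightarrow> nat \<Rightarrow> bit) \<Rightarrow> (nat \<Rightarrow> nat \<Rightarrow> bit)" where
  "blk n1 W1 W2 i j = (if i < n1 \<and> j < n1 then W1 i j else if n1 \<le> i \<and> n1 \<le> j then W2 (i-n1) (j-n1) else 0)"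

definition vcat :: "nat \<Rightarrow> (nat \<Rightarrow> bit) \<Rightarrow> (nat \<Rightarrow> bit) \<Rightarrow> (nat \<Rightarrow> bit)" where
  "vcat n1 c1 c2 i = (if i < n1 then c1 i else c2 (i-n1))"

lemma vcat_vecs: "c1 \<in> vecs n1 \<Longrightarrow> c2 \<in> vecs n2 \<Longrightarrow> vcat n1 c1 c2 \<in> vecs (n1+n2)"
  unfolding vecs_def vcat_def by auto

lemma vcat_zero: "vcat n1 (\<lambda>_. 0) (\<lambda>_. 0) = (\<lambda>_. 0)"
  unfolding vcat_def by auto

lemma blk_wiring:
  assumes "wiring n1 W1" "wiring n2 W2"
  shows "wiring (n1+n2) (blk n1 W1 W2)"
  using assms unfolding wiring_def mats_def blk_def by auto

lemma vdeg_blk1: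
  assumes "W1 \<in> mats n1" "W2 \<in> mats n2" "j < n1"
  shows "vdeg (n1+n2) (blk n1 W1 W2) j = vdeg n1 W1 j"
proof -
  have "{i. i < n1+n2 \<and> blk n1 W1 W2 i j = 1} = {i. i < n1 \<and> W1 i j = 1}"
    using assms by (auto simp: blk_def)
  then show ?thesis unfolding vdeg_def by simp
qed

lemma vdeg_blk2:
  assumes "W1 \<in> mats n1" "W2 \<in> mats n2" "n1 \<le> j"
  shows "vdeg (n1+n2) (blk n1 W1 W2) j = vdeg n2 W2 (j-n1)"
proof -
  have "{i. i < n1+n2 \<and> blk n1 W1 W2 i j = 1} = (\<lambda>k. n1+k) ` {i. i < n2 \<and> W2 i (j-n1) = 1}"
  proof (intro equalityI subsetI)
    fix i assume "i \<in> {i. i < n1+n2 \<and> blk n1 W1 W2 i j = 1}"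
    then have i: "i < n1+n2" "blk n1 W1 W2 i j = 1" by auto
    have "\<not> i < n1" using i assms by (auto simp: blk_def)
    then have "i = n1 + (i - n1)" "i - n1 < n2" using i by auto
    then show "i \<in> (\<lambda>k. n1+k) ` {i. i < n2 \<and> W2 i (j-n1) = 1}"
      using i assms by (intro image_eqI[of _ _ "i - n1"]) (auto simp: blk_def)
  qed (use assms in \<open>auto simp: blk_def\<close>)
  moreover have "card ((\<lambda>k. n1+k) ` {i. i < n2 \<and> W2 i (j-n1) = 1}) = card {i. i < n2 \<and> W2 i (j-n1) = 1}"
    by (rule card_image) (auto simp: inj_on_def)
  ultimately show ?thesis unfolding vdeg_def by simp
qed

lemma vdeg_le_wdeg: "j < n \<Longrightarrow> vdeg n W j \<le> wdeg n W"
  unfolding wdeg_def by (rule Max_ge) auto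

lemma blk_Aset:
  assumes "W1 \<in> Aset n1 m" "W2 \<in> Aset n2 m" "1 \<le> n1"
  shows "blk n1 W1 W2 \<in> Aset (n1+n2) m"
proof -
  have w: "wiring n1 W1" "wiring n2 W2" "W1 \<in> mats n1" "W2 \<in> mats n2"
    using assms unfolding Aset_def wiring_def by auto
  have "\<forall>j\<in>{..<n1+n2}. vdeg (n1+n2) (blk n1 W1 W2) j \<le> m"
  proof
    fix j assume j: "j \<in> {..<n1+n2}"
    show "vdeg (n1+n2) (blk n1 W1 W2) j \<le> m"
    proof (cases "j < n1")
      case True
      then show ?thesis using vdeg_blk1[OF w(3,4) True] vdeg_le_wdeg[of j n1 W1] assms(1)
        unfolding Aset_def by auto
    next
      case False
      have "j - n1 < n2" using False j by auto
      then show ?thesis using vdeg_blk2[OF w(3,4)] vdeg_le_wdeg[of "j-n1" n2 W2] assms(2) False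
        unfolding Aset_def by auto
    qed
  qed
  note allv = this
  have "wdeg (n1+n2) (blk n1 W1 W2) \<le> m"
  proof -
    have "{..<n1+n2} \<noteq> {}" using assms(3) by auto
    then show ?thesis unfolding wdeg_def using allv by (subst Max_le_iff) auto
  qed
  then show ?thesis using blk_wiring[OF w(1,2)] unfolding Aset_def by auto
qed

lemma blk_Astar:
  assumes "W1 \<in> Astar n1 m" "W2 \<in> Astar n2 m"
  shows "blk n1 W1 W2 \<in> Astar (n1+n2) m"
proof -
  have w: "wiring n1 W1" "wiring n2 W2" "W1 \<in> mats n1" "W2 \<in> mats n2"
    using assms unfolding Astar_def wiring_def by auto
  have "\<forall>j<n1+n2. vdeg (n1+n2) (blk n1 W1 W2) j = m"
  proof (intro allI impI)
    fix j assume j: "j < n1+n2"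
    show "vdeg (n1+n2) (blk n1 W1 W2) j = m"
    proof (cases "j < n1")
      case True
      then show ?thesis using vdeg_blk1[OF w(3,4) True] assms(1)
        unfolding Astar_def by auto
    next
      case False
      then show ?thesis using vdeg_blk2[OF w(3,4)] assms(2) j
        unfolding Astar_def by auto
    qed
  qed
  then show ?thesis using blk_wiring[OF w(1,2)] unfolding Astar_def by auto
qed

lemma MW_blk:
  assumes "W1 \<in> mats n1" "W2 \<in> mats n2"
  shows "MW (n1+n2) (blk n1 W1 W2) (vcat n1 c1 c2) \<le> MW n1 W1 c1 + MW n2 W2 c2"
proof -
  let ?W = "blk n1 W1 W2" and ?c = "vcat n1 c1 c2"
  have "\<forall>h\<in>(\<lambda>x. hweight (n1+n2) (mat_vec_aff (n1+n2) ?W x ?c)) ` vecs (n1+n2). h \<le> MW n1 W1 c1 + MW n2 W2 c2"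
  proof
    fix h assume "h \<in> (\<lambda>x. hweight (n1+n2) (mat_vec_aff (n1+n2) ?W x ?c)) ` vecs (n1+n2)"
    then obtain x where x: "x \<in> vecs (n1+n2)" and h: "h = hweight (n1+n2) (mat_vec_aff (n1+n2) ?W x ?c)"
      by auto
    define x1 where "x1 = (\<lambda>i. if i < n1 then x i else 0)"
    define x2 where "x2 = (\<lambda>i. if i < n2 then x (n1+i) else 0)"
    have x1v: "x1 \<in> vecs n1" and x2v: "x2 \<in> vecs n2" unfolding x1_def x2_def vecs_def by auto
    have p1: "hweight n1 (mat_vec_aff (n1+n2) ?W x ?c) = hweight n1 (mat_vec_aff n1 W1 x1 c1)"
    proof (rule hweight_cong)
      fix i assume i: "i < n1"
      have "(\<Sum>j<n1+n2. ?W i j * x j) = (\<Sum>j<n1. W1 i j * x1 j)"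
        unfolding sum_split using i by (simp add: blk_def x1_def)
      then show "mat_vec_aff (n1+n2) ?W x ?c i = mat_vec_aff n1 W1 x1 c1 i"
        using i unfolding mat_vec_aff_def vcat_def by simp
    qed
    have p2: "hweight n2 (\<lambda>k. mat_vec_aff (n1+n2) ?W x ?c (n1+k)) = hweight n2 (mat_vec_aff n2 W2 x2 c2)"
    proof (rule hweight_cong)
      fix i assume i: "i < n2"
      have "(\<Sum>j<n1+n2. ?W (n1+i) j * x j) = (\<Sum>j<n2. W2 i j * x2 j)"
        unfolding sum_split using i by (simp add: blk_def x2_def)
      then show "mat_vec_aff (n1+n2) ?W x ?c (n1+i) = mat_vec_aff n2 W2 x2 c2 i"
        using i unfolding mat_vec_aff_def vcat_def by simp
    qed
    show "h \<le> MW n1 W1 c1 + MW n2 W2 c2"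
      unfolding h hweight_split p1 p2 using MW_ge[OF x1v, of W1 c1] MW_ge[OF x2v, of W2 c2] by simp
  qed
  then show ?thesis unfolding MW_def by (subst Max_le_iff[OF MW_fin MW_ne]) auto
qed



lemma MW_le: "MW n W c \<le> n"
  unfolding MW_def by (subst Max_le_iff[OF MW_fin MW_ne]) (auto simp: hweight_le)

lemma fin_bound: "(\<And>a. a \<in> A \<Longrightarrow> f a \<le> (n::nat)) \<Longrightarrow> finite (f ` A)"
  by (rule finite_subset[of _ "{..n}"]) auto

lemma Min_img_le: "finite (f ` A) \<Longrightarrow> a \<in> A \<Longrightarrow> Min (f ` A) \<le> (f a :: nat)"
  by (rule Min_le) auto

lemma Min_img_in: "finite (f ` A) \<Longrightarrow> A \<noteq> {} \<Longrightarrow> \<exists>a\<in>A. Min (f ` A) = (f a :: nat)"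
proof -
  assume "finite (f ` A)" "A \<noteq> {}"
  then have "Min (f ` A) \<in> f ` A" by (intro Min_in) auto
  then show ?thesis by auto
qed

definition circ :: "nat \<Rightarrow> nat \<Rightarrow> (nat \<Rightarrow> nat \<Rightarrow> bit)" where
  "circ n m i j = (if i < n \<and> j < n \<and> (if j \<le> i then i - j else i + n - j) < m then 1 else 0)"

lemma circ_Astar:
  assumes "1 \<le> m" "m \<le> n"
  shows "circ n m \<in> Astar n m"
proof -
  have "wiring n (circ n m)" using assms unfolding wiring_def mats_def circ_def by auto
  moreover have "vdeg n (circ n m) j = m" if j: "j < n" for j
  proof -
    have e: "{i. i < n \<and> circ n m i j = 1} = {j..<min n (j+m)} \<union> {..<(j+m-n)}"
      using j assms by (auto simp: circ_def split: if_splits)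
    have "card ({j..<min n (j+m)} \<union> {..<(j+m-n)}) = card {j..<min n (j+m)} + card {..<(j+m-n)}"
      by (rule card_Un_disjoint) (use j assms in auto)
    also have "\<dots> = m" using j assms by auto
    finally show ?thesis unfolding vdeg_def e .
  qed
  ultimately show ?thesis unfolding Astar_def by auto
qed

lemma id_Aset:
  assumes "1 \<le> m" "1 \<le> n"
  shows "circ n 1 \<in> Aset n m"
proof -
  have a: "circ n 1 \<in> Astar n 1" using circ_Astar assms by auto
  then have "wdeg n (circ n 1) \<le> m"
  proof -
    have "0 \<in> {..<n}" using assms by auto
    then have "{..<n} \<noteq> {}" by blast
    then show ?thesis unfolding wdeg_def using a assms unfolding Astar_def by (subst Max_le_iff) auto
  qed
  then show ?thesis using a unfolding Aset_def Astar_def by auto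
qed

lemma mats_of_wiring: "wiring n W \<Longrightarrow> W \<in> mats n" unfolding wiring_def by auto

theorem corollary3p3:
  fixes n1 n2 m :: nat
  assumes "1 \<le> n1" and "1 \<le> n2" and "1 \<le> m"
  shows "mu (n1 + n2) m \<le> mu n1 m + mu n2 m
    \<and> nu (n1 + n2) m \<le> nu n1 m + nu n2 m
    \<and> (m \<le> n1 \<and> m \<le> n2 \<longrightarrow> mu_star (n1 + n2) m \<le> mu_star n1 m + mu_star n2 m)
    \<and> (m \<le> n1 \<and> m \<le> n2 \<longrightarrow> nu_star (n1 + n2) m \<le> nu_star n1 m + nu_star n2 m)"
proof (intro conjI impI)
  have z: "(\<lambda>_. 0) \<in> vecs n" for n unfolding vecs_def by auto
  have fin1: "finite ((\<lambda>W. MW n W (\<lambda>_. 0)) ` A)" for n A by (rule fin_bound[of _ _ n]) (rule MW_le)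
  have fin2: "finite ((\<lambda>(W, c). MW n W c) ` B)" for n B by (rule fin_bound[of _ _ n]) (auto simp: MW_le)
  have neA: "Aset n m \<noteq> {}" if "1 \<le> n" for n using id_Aset[OF assms(3) that] by auto
  show "mu (n1 + n2) m \<le> mu n1 m + mu n2 m"
  proof -
    obtain W1 where W1: "W1 \<in> Aset n1 m" "mu n1 m = MW n1 W1 (\<lambda>_. 0)"
      using Min_img_in[OF fin1 neA[OF assms(1)]] unfolding mu_def by blast
    obtain W2 where W2: "W2 \<in> Aset n2 m" "mu n2 m = MW n2 W2 (\<lambda>_. 0)"
      using Min_img_in[OF fin1 neA[OF assms(2)]] unfolding mu_def by blast
    have m: "W1 \<in> mats n1" "W2 \<in> mats n2" using W1 W2 unfolding Aset_def wiring_def by auto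
    have "mu (n1+n2) m \<le> MW (n1+n2) (blk n1 W1 W2) (\<lambda>_. 0)"
      unfolding mu_def by (rule Min_img_le[OF fin1 blk_Aset[OF W1(1) W2(1) assms(1)]])
    also have "\<dots> \<le> MW n1 W1 (\<lambda>_. 0) + MW n2 W2 (\<lambda>_. 0)"
      using MW_blk[OF m, of "\<lambda>_. 0" "\<lambda>_. 0"] by (simp add: vcat_zero)
    finally show ?thesis using W1 W2 by simp
  qed
  show "nu (n1 + n2) m \<le> nu n1 m + nu n2 m"
  proof -
    have ne: "Aset n m \<times> vecs n \<noteq> {}" if "1 \<le> n" for n using neA[OF that] z by auto
    obtain W1 c1 where W1: "W1 \<in> Aset n1 m" "c1 \<in> vecs n1" "nu n1 m = MW n1 W1 c1"
      using Min_img_in[OF fin2[of n1] ne[OF assms(1)]] unfolding nu_def by auto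
    obtain W2 c2 where W2: "W2 \<in> Aset n2 m" "c2 \<in> vecs n2" "nu n2 m = MW n2 W2 c2"
      using Min_img_in[OF fin2[of n2] ne[OF assms(2)]] unfolding nu_def by auto
    have m: "W1 \<in> mats n1" "W2 \<in> mats n2" using W1 W2 unfolding Aset_def wiring_def by auto
    have "nu (n1+n2) m \<le> (\<lambda>(W, c). MW (n1+n2) W c) (blk n1 W1 W2, vcat n1 c1 c2)"
      unfolding nu_def by (rule Min_img_le[OF fin2])
        (use blk_Aset[OF W1(1) W2(1) assms(1)] vcat_vecs[OF W1(2) W2(2)] in auto)
    also have "\<dots> \<le> MW n1 W1 c1 + MW n2 W2 c2"
      using MW_blk[OF m, of c1 c2] by simp
    finally show ?thesis using W1 W2 by simp
  qed
  assume mn: "m \<le> n1 \<and> m \<le> n2"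
  have neS: "Astar n m \<noteq> {}" if "m \<le> n" for n using circ_Astar[OF assms(3) that] by auto
  show "mu_star (n1 + n2) m \<le> mu_star n1 m + mu_star n2 m"
  proof -
    obtain W1 where W1: "W1 \<in> Astar n1 m" "mu_star n1 m = MW n1 W1 (\<lambda>_. 0)"
      using Min_img_in[OF fin1 neS] mn unfolding mu_star_def by blast
    obtain W2 where W2: "W2 \<in> Astar n2 m" "mu_star n2 m = MW n2 W2 (\<lambda>_. 0)"
      using Min_img_in[OF fin1 neS] mn unfolding mu_star_def by blast
    have m: "W1 \<in> mats n1" "W2 \<in> mats n2" using W1 W2 unfolding Astar_def wiring_def by auto
    have "mu_star (n1+n2) m \<le> MW (n1+n2) (blk n1 W1 W2) (\<lambda>_. 0)"
      unfolding mu_star_def by (rule Min_img_le[OF fin1 blk_Astar[OF W1(1) W2(1)]])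
    also have "\<dots> \<le> MW n1 W1 (\<lambda>_. 0) + MW n2 W2 (\<lambda>_. 0)"
      using MW_blk[OF m, of "\<lambda>_. 0" "\<lambda>_. 0"] by (simp add: vcat_zero)
    finally show ?thesis using W1 W2 by simp
  qed
  show "nu_star (n1 + n2) m \<le> nu_star n1 m + nu_star n2 m"
  proof -
    have ne: "Astar n m \<times> vecs n \<noteq> {}" if "m \<le> n" for n using neS[OF that] z by auto
    obtain W1 c1 where W1: "W1 \<in> Astar n1 m" "c1 \<in> vecs n1" "nu_star n1 m = MW n1 W1 c1"
      using Min_img_in[OF fin2 ne] mn unfolding nu_star_def by fastforce
    obtain W2 c2 where W2: "W2 \<in> Astar n2 m" "c2 \<in> vecs n2" "nu_star n2 m = MW n2 W2 c2"
      using Min_img_in[OF fin2 ne] mn unfolding nu_star_def by fastforce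
    have m: "W1 \<in> mats n1" "W2 \<in> mats n2" using W1 W2 unfolding Astar_def wiring_def by auto
    have "nu_star (n1+n2) m \<le> (\<lambda>(W, c). MW (n1+n2) W c) (blk n1 W1 W2, vcat n1 c1 c2)"
      unfolding nu_star_def by (rule Min_img_le[OF fin2])
        (use blk_Astar[OF W1(1) W2(1)] vcat_vecs[OF W1(2) W2(2)] in auto)
    also have "\<dots> \<le> MW n1 W1 c1 + MW n2 W2 c2"
      using MW_blk[OF m, of c1 c2] by simp
    finally show ?thesis using W1 W2 by simp
  qed
qed

end
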